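(* Let $G$ be a $(2K_2, C_4)$-free graph on $n$ vertices and let $\ell \ge \chi(G)+1$ be an integer. Then $\mathcal{R}_\ell(G)$ is connected and has diameter at most $4n$.
   Context: All graphs are finite and simple. A $k$-colouring of $G$ is a map $\alpha: V(G)\to\{1,\dots,k\}$ with $\alpha(u)\neq\alpha(v)$ for every edge $uv$; $\chi(G)$ is the chromatic number. The reconfiguration graph $\mathcal{R}_k(G)$ has the $k$-colourings of $G$ as vertices, two being adjacent if they differ on exactly one vertex. A graph is $(H_1,H_2)$-free if it has no induced subgraph isomorphic to $H_1$ or $H_2$; $2K_2$ is the disjoint union of two edges and $C_4$ is the 4-cycle. *)

theory Defs
  imports Main
begin

definition simple_graph :: "'a set \<Rightarrow> ('a \<Rightarrow> 'a \<Rightarrow> bool) \<Rightarrow> bool" where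
  "simple_graph V E \<longleftrightarrow> finite V \<and> (\<forall>u v. E u v \<longrightarrow> E v u) \<and> (\<forall>v. \<not> E v v)
     \<and> (\<forall>u v. E u v \<longrightarrow> u \<in> V \<and> v \<in> V)"

definition has_induced_2K2 :: "'a set \<Rightarrow> ('a \<Rightarrow> 'a \<Rightarrow> bool) \<Rightarrow> bool" where
  "has_induced_2K2 V E \<longleftrightarrow> (\<exists>a b c d. a \<in> V \<and> b \<in> V \<and> c \<in> V \<and> d \<in> V \<and>
     distinct [a, b, c, d] \<and> E a b \<and> E c d \<and>
     \<not> E a c \<and> \<not> E a d \<and> \<not> E b c \<and> \<not> E b d)"

definition has_induced_C4 :: "'a set \<Rightarrow> ('a \<Rightarrow> 'a \<Rightarrow> bool) \<Rightarrow> bool" where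
  "has_induced_C4 V E \<longleftrightarrow> (\<exists>a b c d. a \<in> V \<and> b \<in> V \<and> c \<in> V \<and> d \<in> V \<and>
     distinct [a, b, c, d] \<and> E a b \<and> E b c \<and> E c d \<and> E d a \<and>
     \<not> E a c \<and> \<not> E b d)"

text \<open>A k-colouring: map V to {1..k}, adjacent vertices get different colours.
  Outside V the map is fixed to 0 so that colourings are determined by their values on V.\<close>
definition is_colouring :: "nat \<Rightarrow> 'a set \<Rightarrow> ('a \<Rightarrow> 'a \<Rightarrow> bool) \<Rightarrow> ('a \<Rightarrow> nat) \<Rightarrow> bool" where
  "is_colouring k V E \<alpha> \<longleftrightarrow> (\<forall>v\<in>V. \<alpha> v \<in> {1..k}) \<and> (\<forall>v. v \<notin> V \<longrightarrow> \<alpha> v = 0)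
     \<and> (\<forall>u v. E u v \<longrightarrow> \<alpha> u \<noteq> \<alpha> v)"

definition chromatic_number :: "'a set \<Rightarrow> ('a \<Rightarrow> 'a \<Rightarrow> bool) \<Rightarrow> nat" where
  "chromatic_number V E = (LEAST k. \<exists>\<alpha>. is_colouring k V E \<alpha>)"

definition recon_adj :: "nat \<Rightarrow> 'a set \<Rightarrow> ('a \<Rightarrow> 'a \<Rightarrow> bool) \<Rightarrow> ('a \<Rightarrow> nat) \<Rightarrow> ('a \<Rightarrow> nat) \<Rightarrow> bool" where
  "recon_adj k V E \<alpha> \<beta> \<longleftrightarrow> is_colouring k V E \<alpha> \<and> is_colouring k V E \<beta> \<and>
     card {v \<in> V. \<alpha> v \<noteq> \<beta> v} = 1"

definition recon_walk :: "nat \<Rightarrow> 'a set \<Rightarrow> ('a \<Rightarrow> 'a \<Rightarrow> bool) \<Rightarrow> ('a \<Rightarrow> nat) list \<Rightarrow> bool" where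
  "recon_walk k V E ws \<longleftrightarrow> ws \<noteq> [] \<and> (\<forall>w\<in>set ws. is_colouring k V E w) \<and>
     (\<forall>i. Suc i < length ws \<longrightarrow> recon_adj k V E (ws ! i) (ws ! Suc i))"

definition recon_connected :: "nat \<Rightarrow> 'a set \<Rightarrow> ('a \<Rightarrow> 'a \<Rightarrow> bool) \<Rightarrow> bool" where
  "recon_connected k V E \<longleftrightarrow> (\<forall>\<alpha> \<beta>. is_colouring k V E \<alpha> \<longrightarrow> is_colouring k V E \<beta> \<longrightarrow>
     (\<exists>ws. recon_walk k V E ws \<and> hd ws = \<alpha> \<and> last ws = \<beta>))"

definition recon_diam_le :: "nat \<Rightarrow> 'a set \<Rightarrow> ('a \<Rightarrow> 'a \<Rightarrow> bool) \<Rightarrow> nat \<Rightarrow> bool" where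
  "recon_diam_le k V E d \<longleftrightarrow> (\<forall>\<alpha> \<beta>. is_colouring k V E \<alpha> \<longrightarrow> is_colouring k V E \<beta> \<longrightarrow>
     (\<exists>ws. recon_walk k V E ws \<and> hd ws = \<alpha> \<and> last ws = \<beta> \<and> length ws - 1 \<le> d))"

end

theory Submission
  imports Defs
begin


definition stp :: "nat \<Rightarrow> 'a set \<Rightarrow> ('a \<Rightarrow> 'a \<Rightarrow> bool) \<Rightarrow> ('a \<Rightarrow> nat) \<Rightarrow> ('a \<Rightarrow> nat) \<Rightarrow> bool" where
  "stp l V E a b \<longleftrightarrow> is_colouring l V E a \<and> is_colouring l V E b \<and> (\<exists>v. \<forall>w. w \<noteq> v \<longrightarrow> a w = b w)"

inductive rch :: "nat \<Rightarrow> 'a set \<Rightarrow> ('a \<Rightarrow> 'a \<Rightarrow> bool) \<Rightarrow> ('a \<Rightarrow> nat) \<Rightarrow> ('a \<Rightarrow> nat) \<Rightarrow> nat \<Rightarrow> bool"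
  for l V E where
  rch_refl: "is_colouring l V E a \<Longrightarrow> rch l V E a a 0"
| rch_step: "rch l V E a b n \<Longrightarrow> stp l V E b c \<Longrightarrow> rch l V E a c (Suc n)"

lemma rch_col: "rch l V E a b n \<Longrightarrow> is_colouring l V E a \<and> is_colouring l V E b"
  by (induction rule: rch.induct) (auto simp: stp_def)

lemma rch_trans: "rch l V E b c n \<Longrightarrow> rch l V E a b m \<Longrightarrow> rch l V E a c (m + n)"
  by (induction rule: rch.induct) (auto intro: rch.intros)

lemma rch_one: "stp l V E a b \<Longrightarrow> rch l V E a b 1"
  using rch_step[OF rch_refl] by (fastforce simp: stp_def)

lemma rch_sym: "rch l V E a b n \<Longrightarrow> rch l V E b a n"
proof (induction rule: rch.induct)
  case (rch_refl a) then show ?case by (rule rch.rch_refl)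
next
  case (rch_step a b n c)
  have "stp l V E c b" using rch_step(2) unfolding stp_def by metis
  then have "rch l V E c b 1" by (rule rch_one)
  from rch_trans[OF rch_step(3) this] show ?case by simp
qed

lemma rch_mono: "rch l V E a b m \<Longrightarrow> m \<le> n \<Longrightarrow> rch l V E a b n"
proof (induction n)
  case 0 then show ?case by simp
next
  case (Suc n)
  show ?case
  proof (cases "m = Suc n")
    case True then show ?thesis using Suc by simp
  next
    case False
    then have "rch l V E a b n" using Suc by simp
    moreover have "stp l V E b b" using rch_col[OF Suc(2)] by (auto simp: stp_def)
    ultimately show ?thesis by (rule rch.rch_step)
  qed
qed

lemma stp_adj: "stp l V E a b \<Longrightarrow> a \<noteq> b \<Longrightarrow> recon_adj l V E a b"
proof -
  assume s: "stp l V E a b" and ne: "a \<noteq> b"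
  then obtain v where v: "\<forall>w. w \<noteq> v \<longrightarrow> a w = b w" by (auto simp: stp_def)
  have "a v \<noteq> b v" using v ne by auto
  moreover have "v \<in> V"
    using s \<open>a v \<noteq> b v\<close> unfolding stp_def is_colouring_def by metis
  ultimately have "{w \<in> V. a w \<noteq> b w} = {v}" using v by auto
  then show ?thesis using s by (simp add: recon_adj_def stp_def)
qed

lemma rch_walk: "rch l V E a b n \<Longrightarrow> \<exists>ws. recon_walk l V E ws \<and> hd ws = a \<and> last ws = b \<and> length ws - 1 \<le> n"
proof (induction rule: rch.induct)
  case (rch_refl a)
  then show ?case by (intro exI[of _ "[a]"]) (auto simp: recon_walk_def)
next
  case (rch_step a b n c)
  then obtain ws where ws: "recon_walk l V E ws" "hd ws = a" "last ws = b" "length ws - 1 \<le> n" by blast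
  show ?case
  proof (cases "b = c")
    case True then show ?thesis using ws by auto
  next
    case False
    have adj: "recon_adj l V E b c" using stp_adj[OF rch_step(2) False] .
    have ne: "ws \<noteq> []" using ws(1) by (simp add: recon_walk_def)
    have "recon_walk l V E (ws @ [c])"
      unfolding recon_walk_def
    proof (intro conjI allI impI)
      show "ws @ [c] \<noteq> []" by simp
      show "\<forall>w\<in>set (ws @ [c]). is_colouring l V E w"
        using ws(1) rch_step(2) by (auto simp: recon_walk_def stp_def)
    next
      fix i assume i: "Suc i < length (ws @ [c])"
      show "recon_adj l V E ((ws @ [c]) ! i) ((ws @ [c]) ! Suc i)"
      proof (cases "Suc i < length ws")
        case True
        then show ?thesis using ws(1) by (simp add: recon_walk_def nth_append)
      next
        case False
        then have "i = length ws - 1" "Suc i = length ws" using i ne by auto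
        then show ?thesis using adj ws(3) ne by (simp add: nth_append last_conv_nth)
      qed
    qed
    then show ?thesis using ws ne by (intro exI[of _ "ws @ [c]"]) auto
  qed
qed



lemma batch:
  assumes "finite S"
    and "\<And>g. (\<forall>v. v \<notin> S \<longrightarrow> g v = a v) \<Longrightarrow> (\<forall>v\<in>S. g v = a v \<or> g v = t v) \<Longrightarrow> is_colouring l V E g"
  shows "rch l V E a (\<lambda>v. if v \<in> S then t v else a v) (card S)"
  using assms
proof (induction S rule: finite_induct)
  case empty
  have "is_colouring l V E a" using empty(1)[of a] by auto
  then show ?case by (simp add: rch_refl)
next
  case (insert x S)
  have ih: "rch l V E a (\<lambda>v. if v \<in> S then t v else a v) (card S)"
    using insert(3)[OF insert(4)] by auto
  have "stp l V E (\<lambda>v. if v \<in> S then t v else a v) (\<lambda>v. if v \<in> insert x S then t v else a v)"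
    unfolding stp_def
  proof (intro conjI)
    show "is_colouring l V E (\<lambda>v. if v \<in> S then t v else a v)"
      by (rule insert(4)) auto
    show "is_colouring l V E (\<lambda>v. if v \<in> insert x S then t v else a v)"
      by (rule insert(4)) auto
    show "\<exists>v. \<forall>w. w \<noteq> v \<longrightarrow> (if w \<in> S then t w else a w) = (if w \<in> insert x S then t w else a w)"
      by (intro exI[of _ x]) auto
  qed
  from rch_step[OF ih this] show ?case using insert(1,2) by simp
qed

lemma single_move:
  assumes "is_colouring l V E a" "v \<in> V" "c \<in> {1..l}" "\<And>u. E v u \<Longrightarrow> a u \<noteq> c" "simple_graph V E"
  shows "rch l V E a (a(v := c)) 1"
proof -
  have "is_colouring l V E (a(v := c))"
    unfolding is_colouring_def
  proof (intro conjI ballI allI impI)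
    fix w assume "w \<in> V" then show "(a(v := c)) w \<in> {1..l}" using assms(1,3) by (auto simp: is_colouring_def)
  next
    fix w assume "w \<notin> V" then show "(a(v := c)) w = 0" using assms(1,2) by (auto simp: is_colouring_def)
  next
    fix u w assume e: "E u w"
    have "E w u" using e assms(5) by (simp add: simple_graph_def)
    then show "(a(v := c)) u \<noteq> (a(v := c)) w"
      using e assms(1,4) assms(5) by (cases "u = v"; cases "w = v") (auto simp: is_colouring_def simple_graph_def)
  qed
  then show ?thesis using assms(1) by (intro rch_one) (auto simp: stp_def intro!: exI[of _ v])
qed

definition col :: "'a set \<Rightarrow> ('a \<Rightarrow> 'b) \<Rightarrow> ('b \<Rightarrow> nat) \<Rightarrow> 'a \<Rightarrow> nat" where
  "col V \<gamma> \<pi> = (\<lambda>v. if v \<in> V then \<pi> (\<gamma> v) else 0)"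

locale labelled =
  fixes V :: "'a set" and E and \<gamma> :: "'a \<Rightarrow> 'b" and U :: "'b set" and l :: nat
  assumes sg: "simple_graph V E"
    and gU: "\<And>v. v \<in> V \<Longrightarrow> \<gamma> v \<in> U"
    and gp: "\<And>u v. E u v \<Longrightarrow> \<gamma> u \<noteq> \<gamma> v"
    and fU: "finite U"
    and cU: "card U < l"
begin

lemma edgeV: "E u v \<Longrightarrow> u \<in> V \<and> v \<in> V" using sg by (simp add: simple_graph_def)

lemma col_is: "inj_on \<pi> U \<Longrightarrow> \<pi> ` U \<subseteq> {1..l} \<Longrightarrow> is_colouring l V E (col V \<gamma> \<pi>)"
  unfolding is_colouring_def col_def
proof (intro conjI ballI allI impI)
  fix v assume "inj_on \<pi> U" "\<pi> ` U \<subseteq> {1..l}" "v \<in> V"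
  then show "(if v \<in> V then \<pi> (\<gamma> v) else 0) \<in> {1..l}" using gU by (meson image_subset_iff)
next
  fix u v assume i: "inj_on \<pi> U" and e: "E u v"
  then show "(if u \<in> V then \<pi> (\<gamma> u) else 0) \<noteq> (if v \<in> V then \<pi> (\<gamma> v) else 0)"
    using gU gp[OF e] edgeV[OF e] by (auto dest: inj_onD)
qed auto


lemma move_class:
  assumes "inj_on \<pi> U" "\<pi> ` U \<subseteq> {1..l}" "inj_on (\<pi>(x := c)) U" "(\<pi>(x := c)) ` U \<subseteq> {1..l}" "x \<in> U"
  shows "rch l V E (col V \<gamma> \<pi>) (col V \<gamma> (\<pi>(x := c))) (card {v\<in>V. \<gamma> v = x})"
proof -
  let ?S = "{v\<in>V. \<gamma> v = x}"
  have fin: "finite ?S" using sg by (simp add: simple_graph_def)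
  have xc: "c \<in> {1..l}" using assms(4,5) by auto
  have p2: "\<And>w. w \<in> U \<Longrightarrow> w \<noteq> x \<Longrightarrow> \<pi> w \<noteq> \<pi> x" using assms(1,5) by (meson inj_on_contraD)
  have p3: "\<And>w. w \<in> U \<Longrightarrow> w \<noteq> x \<Longrightarrow> \<pi> w \<noteq> c"
  proof -
    fix w assume "w \<in> U" "w \<noteq> x"
    then have "(\<pi>(x := c)) w \<noteq> (\<pi>(x := c)) x" using assms(3,5) by (meson inj_on_contraD)
    then show "\<pi> w \<noteq> c" using \<open>w \<noteq> x\<close> by simp
  qed
  have "rch l V E (col V \<gamma> \<pi>) (\<lambda>v. if v \<in> ?S then c else col V \<gamma> \<pi> v) (card ?S)"
  proof (rule batch[OF fin])
    fix g assume g1: "\<forall>v. v \<notin> ?S \<longrightarrow> g v = col V \<gamma> \<pi> v" and g2: "\<forall>v\<in>?S. g v = col V \<gamma> \<pi> v \<or> g v = c"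
    have gv: "\<And>v. v \<in> V \<Longrightarrow> g v = \<pi> (\<gamma> v) \<or> (\<gamma> v = x \<and> g v = c)"
      using g1 g2 by (auto simp: col_def)
    show "is_colouring l V E g"
      unfolding is_colouring_def
    proof (intro conjI ballI allI impI)
      fix v assume v: "v \<in> V"
      have "\<pi> (\<gamma> v) \<in> {1..l}" using gU[OF v] assms(2) by blast
      then show "g v \<in> {1..l}" using gv[OF v] xc by auto
    next
      fix v assume "v \<notin> V" then show "g v = 0" using g1 by (simp add: col_def)
    next
      fix u v assume e: "E u v"
      have uv: "u \<in> V" "v \<in> V" using edgeV[OF e] by auto
      have d: "\<gamma> u \<noteq> \<gamma> v" using gp[OF e] .
      have iu: "\<gamma> u \<in> U" "\<gamma> v \<in> U" using gU uv by auto
      have p1: "\<pi> (\<gamma> u) \<noteq> \<pi> (\<gamma> v)" using assms(1) d iu by (meson inj_on_contraD)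
      show "g u \<noteq> g v"
      proof (cases "\<gamma> u = x")
        case True
        then have "\<gamma> v \<noteq> x" using d by simp
        then show ?thesis using gv[OF uv(1)] gv[OF uv(2)] True p1 p2[OF iu(2)] p3[OF iu(2)] by metis
      next
        case False
        then show ?thesis using gv[OF uv(1)] gv[OF uv(2)] p1 p2[OF iu(1)] p3[OF iu(1)] by metis
      qed
    qed
  qed
  moreover have "(\<lambda>v. if v \<in> ?S then c else col V \<gamma> \<pi> v) = col V \<gamma> (\<pi>(x := c))"
    by (auto simp: col_def)
  ultimately show ?thesis by simp
qed

lemma inj_upd: "inj_on \<pi> U \<Longrightarrow> f \<notin> \<pi> ` (U - {x}) \<Longrightarrow> inj_on (\<pi>(x:=f)) U"
  unfolding inj_on_def by (auto simp: image_iff)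

lemma clique_lemma:
  "finite T \<Longrightarrow> T \<subseteq> U \<Longrightarrow> inj_on \<pi> U \<Longrightarrow> \<pi> ` U \<subseteq> {1..l} \<Longrightarrow> inj_on \<pi>' U \<Longrightarrow> \<pi>' ` U \<subseteq> {1..l}
   \<Longrightarrow> (\<forall>u. u \<notin> T \<longrightarrow> \<pi> u = \<pi>' u)
   \<Longrightarrow> rch l V E (col V \<gamma> \<pi>) (col V \<gamma> \<pi>') (2 * card {v\<in>V. \<gamma> v \<in> T})"
proof (induction "card T" arbitrary: T \<pi> \<pi>' rule: less_induct)
  case less
  note hyps = less.prems
  show ?case
  proof (cases "T = {}")
    case True
    then have "\<pi> = \<pi>'" using hyps(7) by auto
    then show ?thesis using True col_is[OF hyps(3,4)] by (simp add: rch_refl)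
  next
    case False
    have "\<exists>x f. x \<in> T \<and> f \<in> {1..l} \<and> f \<notin> \<pi> ` (U - {x}) \<and> f \<notin> \<pi>' ` (U - {x})"
    proof (cases "\<exists>x\<in>T. \<pi>' x \<notin> \<pi> ` (U - {x})")
      case True
      then obtain x where x: "x \<in> T" "\<pi>' x \<notin> \<pi> ` (U - {x})" by blast
      have "\<pi>' x \<in> {1..l}" using x(1) hyps(2,6) by blast
      moreover have "\<pi>' x \<notin> \<pi>' ` (U - {x})" using hyps(5) x(1) hyps(2)
        by (auto dest: inj_onD)
      ultimately show ?thesis using x by blast
    next
      case nc: False
      obtain x where x: "x \<in> T" using False by blast
      have "card (\<pi> ` U) = card U" using hyps(3) by (simp add: card_image)
      then have "card (\<pi> ` U) < card {1..l}" using cU by simp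
      then have "\<not> {1..l} \<subseteq> \<pi> ` U" using card_mono[of "\<pi> ` U" "{1..l}"] fU by (metis finite_imageI not_le card_mono)
      then obtain f where f: "f \<in> {1..l}" "f \<notin> \<pi> ` U" by blast
      have "f \<notin> \<pi>' ` (U - {x})"
      proof
        assume "f \<in> \<pi>' ` (U - {x})"
        then obtain y where y: "y \<in> U" "f = \<pi>' y" by blast
        show False
        proof (cases "y \<in> T")
          case True
          then have "\<pi>' y \<in> \<pi> ` (U - {y})" using nc by blast
          then show False using f y by blast
        next
          case False
          then have "\<pi> y = \<pi>' y" using hyps(7) by blast
          then show False using f y by (metis imageI)
        qed
      qed
      then show ?thesis using x f by blast
    qed
    then obtain x f where xf: "x \<in> T" "f \<in> {1..l}" "f \<notin> \<pi> ` (U - {x})" "f \<notin> \<pi>' ` (U - {x})" by blast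
    have xU: "x \<in> U" using xf(1) hyps(2) by blast
    have i1: "inj_on (\<pi>(x:=f)) U" by (rule inj_upd[OF hyps(3) xf(3)])
    have r1: "(\<pi>(x:=f)) ` U \<subseteq> {1..l}" using hyps(4) xf(2) by auto
    have i2: "inj_on (\<pi>'(x:=f)) U" by (rule inj_upd[OF hyps(5) xf(4)])
    have r2: "(\<pi>'(x:=f)) ` U \<subseteq> {1..l}" using hyps(6) xf(2) by auto
    have s1: "rch l V E (col V \<gamma> \<pi>) (col V \<gamma> (\<pi>(x:=f))) (card {v\<in>V. \<gamma> v = x})"
      by (rule move_class[OF hyps(3,4) i1 r1 xU])
    have s2: "rch l V E (col V \<gamma> (\<pi>(x:=f))) (col V \<gamma> (\<pi>'(x:=f))) (2 * card {v\<in>V. \<gamma> v \<in> T - {x}})"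
    proof (rule less.hyps)
      show "card (T - {x}) < card T" using xf(1) hyps(1) by (meson card_Diff1_less)
      show "\<forall>u. u \<notin> T - {x} \<longrightarrow> (\<pi>(x := f)) u = (\<pi>'(x := f)) u" using hyps(7) by auto
    qed (use hyps i1 r1 i2 r2 in auto)
    have e3: "(\<pi>'(x:=f))(x := \<pi>' x) = \<pi>'" by simp
    have s3: "rch l V E (col V \<gamma> (\<pi>'(x:=f))) (col V \<gamma> \<pi>') (card {v\<in>V. \<gamma> v = x})"
      using move_class[OF i2 r2 _ _ xU, of "\<pi>' x"] hyps(5,6) e3 by simp
    have fin: "finite V" using sg by (simp add: simple_graph_def)
    have "{v\<in>V. \<gamma> v \<in> T} = {v\<in>V. \<gamma> v = x} \<union> {v\<in>V. \<gamma> v \<in> T - {x}}" using xf(1) by auto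
    then have "card {v\<in>V. \<gamma> v \<in> T} = card {v\<in>V. \<gamma> v = x} + card {v\<in>V. \<gamma> v \<in> T - {x}}"
      using fin by (simp add: card_Un_disjoint disjoint_iff)
    moreover have "rch l V E (col V \<gamma> \<pi>) (col V \<gamma> \<pi>') (card {v\<in>V. \<gamma> v = x} + 2 * card {v\<in>V. \<gamma> v \<in> T - {x}} + card {v\<in>V. \<gamma> v = x})"
      by (rule rch_trans[OF s3 rch_trans[OF s2 s1]])
    ultimately show ?thesis by (simp add: algebra_simps)
  qed
qed

lemma glue:
  assumes red: "\<And>\<alpha>. is_colouring l V E \<alpha> \<Longrightarrow> \<exists>\<pi>. inj_on \<pi> U \<and> \<pi> ` U \<subseteq> {1..l} \<and> rch l V E \<alpha> (col V \<gamma> \<pi>) (card V)"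
  shows "recon_connected l V E \<and> recon_diam_le l V E (4 * card V)"
proof -
  have main: "\<exists>ws. recon_walk l V E ws \<and> hd ws = \<alpha> \<and> last ws = \<beta> \<and> length ws - 1 \<le> 4 * card V"
    if a: "is_colouring l V E \<alpha>" and b: "is_colouring l V E \<beta>" for \<alpha> \<beta>
  proof -
    obtain pa where pa: "inj_on pa U" "pa ` U \<subseteq> {1..l}" "rch l V E \<alpha> (col V \<gamma> pa) (card V)"
      using red[OF a] by blast
    obtain pb where pb: "inj_on pb U" "pb ` U \<subseteq> {1..l}" "rch l V E \<beta> (col V \<gamma> pb) (card V)"
      using red[OF b] by blast
    define pc where "pc = (\<lambda>u. if u \<in> U then pb u else pa u)"
    have c1: "col V \<gamma> pc = col V \<gamma> pb" using gU by (auto simp: col_def pc_def)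
    have c2: "inj_on pc U" using pb(1) by (simp add: pc_def inj_on_def)
    have c3: "pc ` U \<subseteq> {1..l}" using pb(2) by (auto simp: pc_def)
    have "rch l V E (col V \<gamma> pa) (col V \<gamma> pc) (2 * card {v\<in>V. \<gamma> v \<in> U})"
      by (rule clique_lemma[OF fU subset_refl pa(1,2) c2 c3]) (simp add: pc_def)
    moreover have "card {v\<in>V. \<gamma> v \<in> U} \<le> card V"
      using sg by (simp add: simple_graph_def card_mono)
    ultimately have m: "rch l V E (col V \<gamma> pa) (col V \<gamma> pb) (2 * card V)"
      using c1 rch_mono by fastforce
    have "rch l V E \<alpha> \<beta> (card V + 2 * card V + card V)"
      by (rule rch_trans[OF rch_sym[OF pb(3)] rch_trans[OF m pa(3)]])
    then have "rch l V E \<alpha> \<beta> (4 * card V)" by simp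
    then show ?thesis by (rule rch_walk)
  qed
  show ?thesis
    unfolding recon_connected_def recon_diam_le_def using main by blast
qed

end



definition C5 :: "'a set \<Rightarrow> ('a \<Rightarrow> 'a \<Rightarrow> bool) \<Rightarrow> 'a \<Rightarrow> 'a \<Rightarrow> 'a \<Rightarrow> 'a \<Rightarrow> 'a \<Rightarrow> bool" where
  "C5 V E c0 c1 c2 c3 c4 \<longleftrightarrow> c0 \<in> V \<and> c1 \<in> V \<and> c2 \<in> V \<and> c3 \<in> V \<and> c4 \<in> V \<and> distinct [c0,c1,c2,c3,c4] \<and>
     E c0 c1 \<and> E c1 c2 \<and> E c2 c3 \<and> E c3 c4 \<and> E c4 c0 \<and>
     \<not> E c0 c2 \<and> \<not> E c0 c3 \<and> \<not> E c1 c3 \<and> \<not> E c1 c4 \<and> \<not> E c2 c4"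

locale pgraph =
  fixes V :: "'a set" and E :: "'a \<Rightarrow> 'a \<Rightarrow> bool"
  assumes sg: "simple_graph V E"
    and n2K2: "\<not> has_induced_2K2 V E"
    and nC4: "\<not> has_induced_C4 V E"
begin

lemma sym: "E u v \<Longrightarrow> E v u" using sg by (simp add: simple_graph_def)
lemma irr: "\<not> E v v" using sg by (simp add: simple_graph_def)
lemma inV: "E u v \<Longrightarrow> u \<in> V \<and> v \<in> V" using sg by (simp add: simple_graph_def)
lemma finV: "finite V" using sg by (simp add: simple_graph_def)

lemma no2K2: "a \<in> V \<Longrightarrow> b \<in> V \<Longrightarrow> c \<in> V \<Longrightarrow> d \<in> V \<Longrightarrow> distinct [a,b,c,d] \<Longrightarrow> E a b \<Longrightarrow> E c d \<Longrightarrow>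
   \<not> E a c \<Longrightarrow> \<not> E a d \<Longrightarrow> \<not> E b c \<Longrightarrow> \<not> E b d \<Longrightarrow> False"
  using n2K2 unfolding has_induced_2K2_def by blast

lemma noC4: "a \<in> V \<Longrightarrow> b \<in> V \<Longrightarrow> c \<in> V \<Longrightarrow> d \<in> V \<Longrightarrow> distinct [a,b,c,d] \<Longrightarrow> E a b \<Longrightarrow> E b c \<Longrightarrow> E c d \<Longrightarrow> E d a \<Longrightarrow>
   \<not> E a c \<Longrightarrow> \<not> E b d \<Longrightarrow> False"
  using nC4 unfolding has_induced_C4_def by blast

lemma C5_rot: "C5 V E c0 c1 c2 c3 c4 \<Longrightarrow> C5 V E c1 c2 c3 c4 c0"
  unfolding C5_def using sym by auto

lemma rot:
  assumes c: "C5 V E c0 c1 c2 c3 c4" and v: "v \<in> V" "v \<notin> {c0,c1,c2,c3,c4}" and e: "E v c0" "\<not> E v c1"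
  shows False
proof -
  note cc = c[unfolded C5_def]
  have s: "\<And>a b. \<not> E a b \<Longrightarrow> \<not> E b a" using sym by blast
  show False
  proof (cases "E v c2")
    case True
    show False by (rule noC4[of v c0 c1 c2]) (use cc v e True s in auto)
  next
    case n2: False
    show False
    proof (cases "E v c3")
      case True
      show False
      proof (cases "E v c4")
        case True
        show False by (rule no2K2[of v c4 c1 c2]) (use cc v e n2 True s in auto)
      next
        case False
        show False by (rule noC4[of v c0 c4 c3]) (use cc v e n2 \<open>E v c3\<close> False s in auto)
      qed
    next
      case False
      show False by (rule no2K2[of v c0 c2 c3]) (use cc v e n2 False s in auto)
    qed
  qed
qed

lemma partial:
  assumes c: "C5 V E c0 c1 c2 c3 c4" and v: "v \<in> V" "v \<notin> {c0,c1,c2,c3,c4}"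
  shows "(E v c0 \<and> E v c1 \<and> E v c2 \<and> E v c3 \<and> E v c4) \<or> (\<not>E v c0 \<and> \<not>E v c1 \<and> \<not>E v c2 \<and> \<not>E v c3 \<and> \<not>E v c4)"
proof -
  have c1: "C5 V E c1 c2 c3 c4 c0" by (rule C5_rot[OF c])
  have c2: "C5 V E c2 c3 c4 c0 c1" by (rule C5_rot[OF c1])
  have c3: "C5 V E c3 c4 c0 c1 c2" by (rule C5_rot[OF c2])
  have c4: "C5 V E c4 c0 c1 c2 c3" by (rule C5_rot[OF c3])
  have v': "v \<notin> {c1,c2,c3,c4,c0}" "v \<notin> {c2,c3,c4,c0,c1}" "v \<notin> {c3,c4,c0,c1,c2}" "v \<notin> {c4,c0,c1,c2,c3}"
    using v by auto
  show ?thesis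
    using rot[OF c v] rot[OF c1 v(1) v'(1)] rot[OF c2 v(1) v'(2)] rot[OF c3 v(1) v'(3)] rot[OF c4 v(1) v'(4)]
    by blast
qed

definition clq :: "'a set \<Rightarrow> bool" where
  "clq K \<longleftrightarrow> K \<subseteq> V \<and> (\<forall>u\<in>K. \<forall>v\<in>K. u \<noteq> v \<longrightarrow> E u v)"

definition deg :: "'a \<Rightarrow> nat" where "deg v = card {u\<in>V. E v u}"

lemma clq_fin: "clq K \<Longrightarrow> finite K" using finV by (meson clq_def finite_subset)

lemma split:
  assumes noC5: "\<not> (\<exists>c0 c1 c2 c3 c4. C5 V E c0 c1 c2 c3 c4)"
  shows "\<exists>K. clq K \<and> (\<forall>x\<in>V-K. \<forall>y\<in>V-K. \<not> E x y) \<and> (\<forall>x\<in>V-K. \<exists>a\<in>K. \<not> E a x)"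
proof -
  have "\<exists>w. (\<exists>K. clq K \<and> card K = w) \<and> (\<forall>y. (\<exists>K. clq K \<and> card K = y) \<longrightarrow> y \<le> w)"
  proof (rule Nat.ex_has_greatest_nat[of _ 0 "card V"])
    show "\<exists>K. clq K \<and> card K = 0" by (intro exI[of _ "{}"]) (simp add: clq_def)
    show "\<forall>y. (\<exists>K. clq K \<and> card K = y) \<longrightarrow> y \<le> card V"
      using finV by (auto simp: clq_def card_mono)
  qed
  then obtain w where w: "\<exists>K. clq K \<and> card K = w" "\<And>K. clq K \<Longrightarrow> card K \<le> w" by blast
  then obtain K0 where K0: "clq K0 \<and> card K0 = w" by blast
  have "\<exists>K. (clq K \<and> card K = w) \<and> (\<forall>K'. (clq K' \<and> card K' = w) \<longrightarrow> sum deg K' \<le> sum deg K)"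
  proof (rule Lattices_Big.ex_has_greatest_nat[of _ K0 _ "Suc (card V * card V)"])
    show "clq K0 \<and> card K0 = w" by (rule K0)
    show "\<forall>y. clq y \<and> card y = w \<longrightarrow> sum deg y < Suc (card V * card V)"
    proof (intro allI impI)
      fix K assume K: "clq K \<and> card K = w"
      have "\<forall>v\<in>K. deg v \<le> card V" unfolding deg_def using finV by (intro ballI card_mono) auto
      then have "sum deg K \<le> card K * card V" using sum_bounded_above[of K deg "card V"] by simp
      also have "\<dots> \<le> card V * card V" using K finV by (intro mult_le_mono1 card_mono) (auto simp: clq_def)
      finally show "sum deg K < Suc (card V * card V)" by simp
    qed
  qed
  then obtain K where K: "clq K" "card K = w" and Kmax: "\<And>K'. clq K' \<Longrightarrow> card K' = w \<Longrightarrow> sum deg K' \<le> sum deg K"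
    by blast
  have finK: "finite K" using clq_fin[OF K(1)] .
  have KV: "K \<subseteq> V" using K(1) by (simp add: clq_def)
  have Kc: "\<And>u v. u \<in> K \<Longrightarrow> v \<in> K \<Longrightarrow> u \<noteq> v \<Longrightarrow> E u v" using K(1) by (simp add: clq_def)
  have mx: "\<exists>a\<in>K. \<not> E a x" if x: "x \<in> V - K" for x
  proof (rule ccontr)
    assume "\<not> (\<exists>a\<in>K. \<not> E a x)"
    then have "clq (insert x K)" using K(1) x sym unfolding clq_def by auto
    then have "card (insert x K) \<le> w" by (rule w(2))
    then show False using x finK K(2) by simp
  qed
  have core: False if xy: "x \<in> V - K" "y \<in> V - K" "E x y" and inc: "\<forall>b\<in>K. E x b \<longrightarrow> E y b" for x y
  proof -
    obtain a where a: "a \<in> K" "\<not> E a y" using mx[OF xy(2)] by blast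
    have nya: "\<not> E y a" using a(2) sym by blast
    have nxa: "\<not> E x a" using inc a(1) nya by blast
    have xV: "x \<in> V" "y \<in> V" "a \<in> V" using xy KV a by auto
    have xney: "x \<noteq> y" using xy(3) irr by auto
    have yall: "E y b" if b: "b \<in> K" "b \<noteq> a" for b
    proof (rule ccontr)
      assume nyb: "\<not> E y b"
      have nxb: "\<not> E x b" using inc b(1) nyb by blast
      show False
        by (rule no2K2[of x y a b]) (use xV b KV xy xney Kc[OF a(1) b(1)] nxa nxb nya nyb in auto)
    qed
    let ?K' = "insert y (K - {a})"
    have cK': "clq ?K'" using K(1) yall xy(2) sym unfolding clq_def by auto
    have cardK': "card ?K' = w" using finK a(1) xy(2) K(2) card_gt_0_iff[of K] by (auto simp: card_Diff_singleton)
    have "sum deg ?K' \<le> sum deg K" by (rule Kmax[OF cK' cardK'])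
    moreover have "sum deg ?K' = deg y + sum deg (K - {a})" using finK xy(2) by simp
    moreover have "sum deg K = deg a + sum deg (K - {a})" using finK a(1) by (simp add: sum.remove)
    ultimately have dya: "deg y \<le> deg a" by simp
    have "\<exists>z. E a z \<and> \<not> E y z"
    proof (rule ccontr)
      assume "\<not> (\<exists>z. E a z \<and> \<not> E y z)"
      then have sub: "{u\<in>V. E a u} \<subseteq> {u\<in>V. E y u}" by auto
      have "x \<in> {u\<in>V. E y u}" "x \<notin> {u\<in>V. E a u}" using xV xy(3) sym nxa by auto
      then have "{u\<in>V. E a u} \<subset> {u\<in>V. E y u}" using sub by blast
      then have "deg a < deg y" unfolding deg_def using finV by (intro psubset_card_mono) auto
      then show False using dya by simp
    qed
    then obtain z where z: "E a z" "\<not> E y z" by blast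
    have zV: "z \<in> V" using inV[OF z(1)] by simp
    have zK: "z \<notin> K"
    proof
      assume "z \<in> K"
      moreover have "z \<noteq> a" using z(1) irr by auto
      ultimately show False using yall z(2) by blast
    qed
    have zx: "z \<noteq> x" using z(1) nxa sym by auto
    have zy: "z \<noteq> y" using z(1) nya sym by auto
    have nzy: "\<not> E z y" using z(2) sym by blast
    have xz: "E x z"
    proof (rule ccontr)
      assume nxz: "\<not> E x z"
      show False
        by (rule no2K2[of x y a z]) (use xV zV a xy xney zx zy zK z nxa nxz nya in auto)
    qed
    have xall: "E x b" if b: "b \<in> K" "b \<noteq> a" for b
    proof (rule ccontr)
      assume nxb: "\<not> E x b"
      have yb: "E y b" using yall[OF b] .
      have bV: "b \<in> V" using b KV by auto
      show False
      proof (cases "E z b")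
        case True
        show False
          by (rule noC4[of y x z b]) (use xV zV bV b xy zK zx zy xney True yb nxb sym z xz in auto)
      next
        case False
        have "C5 V E y x z a b"
          unfolding C5_def using xV zV bV b a xy zK zx zy xney False yb nxb sym z xz Kc[OF a(1) b(1)] nxa nya
          by auto
        then show False using noC5 by blast
      qed
    qed
    have zall: "E z b" if b: "b \<in> K" "b \<noteq> a" for b
    proof (rule ccontr)
      assume nzb: "\<not> E z b"
      have bV: "b \<in> V" using b KV by auto
      show False
        by (rule noC4[of x b a z]) (use xV zV bV b a xy zK zx xall[OF b] Kc[OF b(1) a(1)] z xz nxa nzb sym in auto)
    qed
    have "clq (insert z K)" using K(1) zall z(1) zV sym unfolding clq_def by auto
    then have "card (insert z K) \<le> w" by (rule w(2))
    then show False using zK finK K(2) by simp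
  qed
  have indep: "\<not> E x y" if "x \<in> V - K" "y \<in> V - K" for x y
  proof
    assume e: "E x y"
    show False
    proof (cases "\<forall>b\<in>K. E x b \<longrightarrow> E y b")
      case True then show False using core[OF that e] by blast
    next
      case F1: False
      show False
      proof (cases "\<forall>b\<in>K. E y b \<longrightarrow> E x b")
        case True then show False using core[OF that(2,1) sym[OF e]] by blast
      next
        case False
        then obtain b where b: "b \<in> K" "E y b" "\<not> E x b" by blast
        obtain a where a: "a \<in> K" "E x a" "\<not> E y a" using F1 by blast
        have "a \<noteq> b" using a b by auto
        show False
          by (rule noC4[of x a b y]) (use that a b KV Kc[OF a(1) b(1) \<open>a \<noteq> b\<close>] e sym irr in auto)
      qed
    qed
  qed
  show ?thesis using K(1) indep mx by blast
qed

end



lemma exists_col: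
  assumes "simple_graph V E" "\<And>v. v \<in> V \<Longrightarrow> \<gamma> v \<in> U" "\<And>u v. E u v \<Longrightarrow> \<gamma> u \<noteq> \<gamma> v" "finite U"
  shows "\<exists>\<alpha>. is_colouring (card U + 1) V E \<alpha>"
proof -
  interpret labelled V E \<gamma> U "card U + 1" using assms by unfold_locales auto
  obtain h where h: "bij_betw h U {0..<card U}" using ex_bij_betw_finite_nat[OF assms(4)] by blast
  have "inj_on (Suc \<circ> h) U" using h by (auto simp: bij_betw_def inj_on_def)
  moreover have "(Suc \<circ> h) ` U \<subseteq> {1..card U + 1}" using bij_betwE[OF h] by fastforce
  ultimately show ?thesis using col_is by blast
qed

lemma chi_bound:
  assumes "\<exists>\<alpha>. is_colouring k0 V E \<alpha>" "\<And>k \<alpha>. is_colouring k V E \<alpha> \<Longrightarrow> m \<le> k"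
    "l \<ge> chromatic_number V E + 1"
  shows "m < l"
proof -
  have "\<exists>\<alpha>. is_colouring (chromatic_number V E) V E \<alpha>"
    unfolding chromatic_number_def using assms(1) LeastI[of "\<lambda>k. \<exists>\<alpha>. is_colouring k V E \<alpha>" k0] by blast
  then have "m \<le> chromatic_number V E" using assms(2) by blast
  then show ?thesis using assms(3) by simp
qed

context pgraph begin

lemma caseB:
  assumes K: "clq K" and ind: "\<forall>x\<in>V-K. \<forall>y\<in>V-K. \<not> E x y" and mx: "\<forall>x\<in>V-K. \<exists>a\<in>K. \<not> E a x"
    and l: "l \<ge> chromatic_number V E + 1"
  shows "recon_connected l V E \<and> recon_diam_le l V E (4 * card V)"
proof -
  define \<gamma> where "\<gamma> v = (if v \<in> K then v else (SOME a. a \<in> K \<and> \<not> E a v))" for v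
  have KV: "K \<subseteq> V" and Kc: "\<And>u v. u \<in> K \<Longrightarrow> v \<in> K \<Longrightarrow> u \<noteq> v \<Longrightarrow> E u v" using K by (auto simp: clq_def)
  have finK: "finite K" using clq_fin[OF K] .
  have gI: "\<gamma> v \<in> K \<and> \<not> E (\<gamma> v) v" if "v \<in> V - K" for v
  proof -
    have "\<exists>a. a \<in> K \<and> \<not> E a v" using mx that by blast
    then have "(SOME a. a \<in> K \<and> \<not> E a v) \<in> K \<and> \<not> E (SOME a. a \<in> K \<and> \<not> E a v) v" by (rule someI_ex)
    then show ?thesis using that by (simp add: \<gamma>_def)
  qed
  have gK: "\<gamma> v = v" if "v \<in> K" for v using that by (simp add: \<gamma>_def)
  have gU: "\<gamma> v \<in> K" if "v \<in> V" for v using gI gK that by (cases "v \<in> K") auto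
  have KI: "\<And>u v. u \<in> K \<Longrightarrow> v \<in> V - K \<Longrightarrow> E u v \<Longrightarrow> \<gamma> u \<noteq> \<gamma> v"
    using gI gK by force
  have gp: "\<gamma> u \<noteq> \<gamma> v" if e: "E u v" for u v
  proof -
    have uv: "u \<in> V" "v \<in> V" using inV[OF e] by auto
    show ?thesis
    proof (cases "u \<in> K")
      case True
      show ?thesis
      proof (cases "v \<in> K")
        case True then show ?thesis using \<open>u \<in> K\<close> gK e irr by metis
      next
        case False then show ?thesis using KI[OF \<open>u \<in> K\<close> _ e] uv by blast
      qed
    next
      case False
      show ?thesis
      proof (cases "v \<in> K")
        case True then show ?thesis using KI[OF True _ sym[OF e]] uv False by fastforce
      next
        case F2: False then show ?thesis using ind uv False e by blast
      qed
    qed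
  qed
  have lb: "card K \<le> k" if a: "is_colouring k V E \<alpha>" for k \<alpha>
  proof -
    have "inj_on \<alpha> K" using a Kc unfolding is_colouring_def inj_on_def by metis
    moreover have "\<alpha> ` K \<subseteq> {1..k}" using a KV unfolding is_colouring_def by auto
    ultimately show ?thesis by (metis card_atLeastAtMost card_image card_mono diff_Suc_1 finite_atLeastAtMost)
  qed
  have ex: "\<exists>\<alpha>. is_colouring (card K + 1) V E \<alpha>" by (rule exists_col[OF sg gU gp finK])
  have cU: "card K < l" by (rule chi_bound[OF ex lb l])
  interpret labelled V E \<gamma> K l using sg gU gp finK cU by unfold_locales auto
  show ?thesis
  proof (rule glue)
    fix \<alpha> assume a: "is_colouring l V E \<alpha>"
    have ainj: "inj_on \<alpha> K" using a Kc unfolding is_colouring_def inj_on_def by metis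
    have arng: "\<alpha> ` K \<subseteq> {1..l}" using a KV unfolding is_colouring_def by auto
    have finS: "finite (V - K)" using finV by simp
    have "rch l V E \<alpha> (\<lambda>v. if v \<in> V - K then \<alpha> (\<gamma> v) else \<alpha> v) (card (V - K))"
    proof (rule batch[OF finS])
      fix g assume g1: "\<forall>v. v \<notin> V - K \<longrightarrow> g v = \<alpha> v" and g2: "\<forall>v\<in>V - K. g v = \<alpha> v \<or> g v = \<alpha> (\<gamma> v)"
      have ki: "g u \<noteq> g v" if u: "u \<in> K" and v: "v \<in> V - K" and e: "E u v" for u v
      proof -
        have "g u = \<alpha> u" using g1 u by blast
        moreover have "\<alpha> u \<noteq> \<alpha> v" using a e unfolding is_colouring_def by blast
        moreover have "\<alpha> u \<noteq> \<alpha> (\<gamma> v)"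
        proof -
          have "\<gamma> v \<in> K" "\<gamma> v \<noteq> u" using gI[OF v] e by auto
          then have "E u (\<gamma> v)" using Kc u by blast
          then show ?thesis using a unfolding is_colouring_def by blast
        qed
        ultimately show ?thesis using g2 v by metis
      qed
      show "is_colouring l V E g"
        unfolding is_colouring_def
      proof (intro conjI ballI allI impI)
        fix v assume v: "v \<in> V"
        have "\<alpha> v \<in> {1..l}" using a v by (simp add: is_colouring_def)
        moreover have "v \<in> V - K \<Longrightarrow> \<alpha> (\<gamma> v) \<in> {1..l}" using a gU v KV by (auto simp: is_colouring_def)
        ultimately show "g v \<in> {1..l}" using g1 g2 v by metis
      next
        fix v assume "v \<notin> V" then show "g v = 0" using g1 a by (simp add: is_colouring_def)
      next
        fix u v assume e: "E u v"
        have uv: "u \<in> V" "v \<in> V" using inV[OF e] by auto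
        show "g u \<noteq> g v"
        proof (cases "u \<in> K")
          case True
          show ?thesis
          proof (cases "v \<in> K")
            case True then show ?thesis using \<open>u \<in> K\<close> g1 a e unfolding is_colouring_def by auto
          next
            case False then show ?thesis using ki[OF \<open>u \<in> K\<close> _ e] uv by blast
          qed
        next
          case False
          show ?thesis
          proof (cases "v \<in> K")
            case True
            have "g v \<noteq> g u" using ki[OF True _ sym[OF e]] uv False by blast
            then show ?thesis by metis
          next
            case F2: False then show ?thesis using ind uv False e by blast
          qed
        qed
      qed
    qed
    moreover have "(\<lambda>v. if v \<in> V - K then \<alpha> (\<gamma> v) else \<alpha> v) = col V \<gamma> \<alpha>"
      using a gK unfolding col_def is_colouring_def by auto
    moreover have "card (V - K) \<le> card V" using finV by (simp add: card_mono)
    ultimately have "rch l V E \<alpha> (col V \<gamma> \<alpha>) (card V)" using rch_mono by metis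
    then show "\<exists>\<pi>. inj_on \<pi> K \<and> \<pi> ` K \<subseteq> {1..l} \<and> rch l V E \<alpha> (col V \<gamma> \<pi>) (card V)"
      using ainj arng by blast
  qed
qed

end



lemma avail: "finite (B::nat set) \<Longrightarrow> card B < l \<Longrightarrow> \<exists>y\<in>{1..l}. y \<notin> B"
proof (rule ccontr)
  assume "finite B" "card B < l" "\<not> (\<exists>y\<in>{1..l}. y \<notin> B)"
  then have "{1..l} \<subseteq> B" by blast
  then have "card {1..l} \<le> card B" using \<open>finite B\<close> by (rule card_mono[rotated])
  then show False using \<open>card B < l\<close> by simp
qed

context pgraph begin

lemma caseA:
  assumes c: "C5 V E c0 c1 c2 c3 c4" and l: "l \<ge> chromatic_number V E + 1"
  shows "recon_connected l V E \<and> recon_diam_le l V E (4 * card V)"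
proof -
  note cc = c[unfolded C5_def]
  define C where "C = {c0,c1,c2,c3,c4}"
  define K where "K = {v\<in>V. v \<notin> C \<and> E v c0}"
  define I where "I = {v\<in>V. v \<notin> C \<and> \<not> E v c0}"
  have CV: "C \<subseteq> V" using cc by (auto simp: C_def)
  have kall: "E v c0 \<and> E v c1 \<and> E v c2 \<and> E v c3 \<and> E v c4" if "v \<in> K" for v
    using partial[OF c] that by (auto simp: K_def C_def)
  have inone: "\<not>E v c0 \<and> \<not>E v c1 \<and> \<not>E v c2 \<and> \<not>E v c3 \<and> \<not>E v c4" if "v \<in> I" for v
    using partial[OF c] that by (auto simp: I_def C_def)
  have KV: "K \<subseteq> V" by (auto simp: K_def)
  have cK: "c0 \<notin> K" "c1 \<notin> K" "c2 \<notin> K" "c3 \<notin> K" "c4 \<notin> K" by (auto simp: K_def C_def)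
  have cI: "c0 \<notin> I" "c1 \<notin> I" "c2 \<notin> I" "c3 \<notin> I" "c4 \<notin> I" by (auto simp: I_def C_def)
  have Vpart: "v \<in> K \<or> v \<in> C \<or> v \<in> I" if "v \<in> V" for v using that by (auto simp: K_def I_def)
  have Kc: "E u v" if "u \<in> K" "v \<in> K" "u \<noteq> v" for u v
  proof (rule ccontr)
    assume n: "\<not> E u v"
    show False
      by (rule noC4[of u c0 v c2]) (use that n kall cc sym KV cK in auto)
  qed
  have Iind: "\<not> E u v" if "u \<in> I" "v \<in> I" for u v
  proof
    assume e: "E u v"
    have "u \<in> V" "v \<in> V" "u \<noteq> v" using that e irr by (auto simp: I_def)
    then show False
      by (rule_tac no2K2[of u v c0 c1]) (use that e inone cc sym cI in auto)
  qed
  have nbI: "u \<in> K" if "v \<in> I" "E v u" for u v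
  proof -
    have "u \<in> V" using inV[OF that(2)] by simp
    moreover have "u \<notin> C" using inone[OF that(1)] that(2) by (auto simp: C_def)
    moreover have "u \<notin> I" using Iind that by blast
    ultimately show ?thesis using Vpart by blast
  qed
  have nbC: "u \<in> K \<or> u \<in> C" if "v \<in> C" "E v u" for u v
  proof -
    have "u \<in> V" using inV[OF that(2)] by simp
    moreover have "u \<notin> I" using inone that sym by (auto simp: C_def)
    ultimately show ?thesis using Vpart by blast
  qed
  have finK: "finite K" using KV finV finite_subset by blast
  define \<gamma> where "\<gamma> v = (if v \<in> K then v else if v = c0 then c0 else if v = c1 \<or> v = c3 then c1
     else if v = c2 \<or> v = c4 then c2 else if (\<exists>a\<in>K. \<not> E a v) then (SOME a. a \<in> K \<and> \<not> E a v) else c0)" for v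
  define U where "U = K \<union> {c0,c1,c2}"
  have gK: "\<gamma> v = v" if "v \<in> K" for v using that by (simp add: \<gamma>_def)
  have gC: "\<gamma> c0 = c0" "\<gamma> c1 = c1" "\<gamma> c2 = c2" "\<gamma> c3 = c1" "\<gamma> c4 = c2"
    using cK cc by (auto simp: \<gamma>_def)
  have gI: "(\<gamma> v \<in> K \<and> \<not> E (\<gamma> v) v) \<or> \<gamma> v = c0" if v: "v \<in> I" for v
  proof -
    have nv: "v \<notin> K" "v \<noteq> c0" "v \<noteq> c1" "v \<noteq> c2" "v \<noteq> c3" "v \<noteq> c4"
      using v by (auto simp: I_def K_def C_def)
    show ?thesis
    proof (cases "\<exists>a\<in>K. \<not> E a v")
      case True
      then have "\<exists>a. a \<in> K \<and> \<not> E a v" by blast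
      then have "(SOME a. a \<in> K \<and> \<not> E a v) \<in> K \<and> \<not> E (SOME a. a \<in> K \<and> \<not> E a v) v" by (rule someI_ex)
      then show ?thesis using nv True by (simp add: \<gamma>_def)
    next
      case False then show ?thesis using nv by (simp add: \<gamma>_def)
    qed
  qed
  have gU: "\<gamma> v \<in> U" if "v \<in> V" for v
    using Vpart[OF that] gK gC gI by (auto simp: U_def C_def)
  have gp: "\<gamma> u \<noteq> \<gamma> v" if e: "E u v" for u v
  proof -
    have uv: "u \<in> V" "v \<in> V" using inV[OF e] by auto
    have kn: "\<gamma> a \<noteq> \<gamma> b" if a: "a \<in> K" "b \<notin> K" "b \<in> V" "E a b" for a b
    proof -
      have "b \<in> C \<or> b \<in> I" using Vpart[OF a(3)] a(2) by blast
      then show ?thesis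
      proof
        assume "b \<in> C"
        then show ?thesis using gK[OF a(1)] gC cK a(1) by (auto simp: C_def)
      next
        assume "b \<in> I"
        then show ?thesis using gI[of b] gK[OF a(1)] a cK by auto
      qed
    qed
    show ?thesis
    proof (cases "u \<in> K")
      case True
      show ?thesis
      proof (cases "v \<in> K")
        case True then show ?thesis using \<open>u \<in> K\<close> gK e irr by metis
      next
        case False from kn[OF \<open>u \<in> K\<close> False uv(2) e] show ?thesis .
      qed
    next
      case uK: False
      show ?thesis
      proof (cases "v \<in> K")
        case True then show ?thesis using kn[OF True uK uv(1) sym[OF e]] by metis
      next
        case vK: False
        have "u \<notin> I" using nbI e vK by blast
        moreover have "v \<notin> I" using nbI sym[OF e] uK by blast
        ultimately have "u \<in> C" "v \<in> C" using Vpart uv uK vK by auto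
        then show ?thesis using e gC cc irr sym unfolding C_def by auto
      qed
    qed
  qed
  have cardU: "card U = card K + 3"
    using finK cK cc by (simp add: U_def)
  have lb: "card K + 3 \<le> k" if a: "is_colouring k V E \<alpha>" for k \<alpha>
  proof -
    have ac: "\<alpha> u \<noteq> \<alpha> v" if "E u v" for u v using a that by (simp add: is_colouring_def)
    have inj: "inj_on \<alpha> K" using ac Kc unfolding inj_on_def by metis
    have "\<exists>p q r. p \<in> C \<and> q \<in> C \<and> r \<in> C \<and> \<alpha> p \<noteq> \<alpha> q \<and> \<alpha> q \<noteq> \<alpha> r \<and> \<alpha> p \<noteq> \<alpha> r"
    proof -
      have d01: "\<alpha> c0 \<noteq> \<alpha> c1" "\<alpha> c1 \<noteq> \<alpha> c2" "\<alpha> c2 \<noteq> \<alpha> c3" "\<alpha> c3 \<noteq> \<alpha> c4" "\<alpha> c4 \<noteq> \<alpha> c0"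
        using ac cc by auto
      show ?thesis
      proof (cases "\<alpha> c2 = \<alpha> c0")
        case False then show ?thesis using d01 by (intro exI[of _ c0] exI[of _ c1] exI[of _ c2]) (auto simp: C_def)
      next
        case True
        show ?thesis
        proof (cases "\<alpha> c3 = \<alpha> c1")
          case False then show ?thesis using d01 True by (intro exI[of _ c0] exI[of _ c1] exI[of _ c3]) (auto simp: C_def)
        next
          case T3: True then show ?thesis using d01 True by (intro exI[of _ c0] exI[of _ c1] exI[of _ c4]) (auto simp: C_def)
        qed
      qed
    qed
    then obtain p q r where pqr: "p \<in> C" "q \<in> C" "r \<in> C" "\<alpha> p \<noteq> \<alpha> q" "\<alpha> q \<noteq> \<alpha> r" "\<alpha> p \<noteq> \<alpha> r" by blast
    have nK: "\<alpha> s \<notin> \<alpha> ` K" if "s \<in> C" for s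
    proof
      assume "\<alpha> s \<in> \<alpha> ` K"
      then obtain u where "u \<in> K" "\<alpha> s = \<alpha> u" by blast
      moreover have "E u s" using kall[OF \<open>u \<in> K\<close>] that by (auto simp: C_def)
      ultimately show False using ac by metis
    qed
    have sub: "\<alpha> ` K \<union> {\<alpha> p, \<alpha> q, \<alpha> r} \<subseteq> {1..k}" using a KV CV pqr unfolding is_colouring_def by auto
    have "card (\<alpha> ` K \<union> {\<alpha> p, \<alpha> q, \<alpha> r}) = card (\<alpha> ` K) + card {\<alpha> p, \<alpha> q, \<alpha> r}"
      using finK nK pqr by (intro card_Un_disjoint) auto
    also have "\<dots> = card K + 3" using inj pqr by (simp add: card_image)
    finally show ?thesis using card_mono[OF _ sub] by simp
  qed
  have finU: "finite U" using finK by (simp add: U_def)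
  have ex: "\<exists>\<alpha>. is_colouring (card U + 1) V E \<alpha>" by (rule exists_col[OF sg gU gp finU])
  have cU: "card U < l" using chi_bound[OF ex _ l] lb cardU by metis
  interpret labelled V E \<gamma> U l using sg gU gp finU cU by unfold_locales auto
  show ?thesis
  proof (rule glue)
    fix \<alpha> assume a: "is_colouring l V E \<alpha>"
    have ac: "\<alpha> u \<noteq> \<alpha> v" if "E u v" for u v using a that by (simp add: is_colouring_def)
    have ainj: "inj_on \<alpha> K" using ac Kc unfolding inj_on_def by metis
    have arng: "\<alpha> v \<in> {1..l}" if "v \<in> V" for v using a that by (simp add: is_colouring_def)
    have cardaK: "card (\<alpha> ` K) = card K" using ainj by (simp add: card_image)
    have nbc0: "u \<in> K \<or> u = c1 \<or> u = c4" if "E c0 u" for u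
      using nbC[of c0 u] that cc irr by (auto simp: C_def)
    have nbc1: "u \<in> K \<or> u = c0 \<or> u = c2" if "E c1 u" for u
      using nbC[of c1 u] that cc irr sym by (auto simp: C_def)
    have nbc2: "u \<in> K \<or> u = c1 \<or> u = c3" if "E c2 u" for u
      using nbC[of c2 u] that cc irr sym by (auto simp: C_def)
    have nbc3: "u \<in> K \<or> u = c2 \<or> u = c4" if "E c3 u" for u
      using nbC[of c3 u] that cc irr sym by (auto simp: C_def)
    have nbc4: "u \<in> K \<or> u = c3 \<or> u = c0" if "E c4 u" for u
      using nbC[of c4 u] that cc irr sym by (auto simp: C_def)
    have "card (\<alpha> ` K \<union> {\<alpha> c0, \<alpha> c1, \<alpha> c3}) \<le> card (\<alpha> ` K) + card {\<alpha> c0, \<alpha> c1, \<alpha> c3}"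
      by (rule card_Un_le)
    also have "\<dots> \<le> card K + 3" using cardaK card_insert_le[of "{}"]
      by (simp add: card_insert_if)
    finally have "card (\<alpha> ` K \<union> {\<alpha> c0, \<alpha> c1, \<alpha> c3}) < l" using cU cardU by simp
    then obtain y where y: "y \<in> {1..l}" "y \<notin> \<alpha> ` K" "y \<noteq> \<alpha> c0" "y \<noteq> \<alpha> c1" "y \<noteq> \<alpha> c3"
      using avail[of "\<alpha> ` K \<union> {\<alpha> c0, \<alpha> c1, \<alpha> c3}" l] finK by auto
    have "card (\<alpha> ` K \<union> {\<alpha> c0, y}) \<le> card (\<alpha> ` K) + card {\<alpha> c0, y}"
      by (rule card_Un_le)
    also have "\<dots> \<le> card K + 2" using cardaK by (simp add: card_insert_if)
    finally have "card (\<alpha> ` K \<union> {\<alpha> c0, y}) < l" using cU cardU by simp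
    then obtain x where x: "x \<in> {1..l}" "x \<notin> \<alpha> ` K" "x \<noteq> \<alpha> c0" "x \<noteq> y"
      using avail[of "\<alpha> ` K \<union> {\<alpha> c0, y}" l] finK by auto
    have nKx: "\<alpha> u \<noteq> x" "\<alpha> u \<noteq> y" if "u \<in> K" for u using that x y by auto
    define a1 where "a1 = \<alpha>(c2 := y)"
    define a2 where "a2 = a1(c4 := y)"
    define a3 where "a3 = a2(c1 := x)"
    define a4 where "a4 = a3(c3 := x)"
    have r1: "rch l V E \<alpha> a1 1" unfolding a1_def
      by (rule single_move[OF a _ y(1) _ sg]) (use cc nbc2 nKx y in auto)
    have a1c: "is_colouring l V E a1" using rch_col[OF r1] by simp
    have r2: "rch l V E a1 a2 1" unfolding a2_def
      by (rule single_move[OF a1c _ y(1) _ sg]) (use cc nbc4 nKx y cK in \<open>auto simp: a1_def\<close>)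
    have a2c: "is_colouring l V E a2" using rch_col[OF r2] by simp
    have r3: "rch l V E a2 a3 1" unfolding a3_def
      by (rule single_move[OF a2c _ x(1) _ sg]) (use cc nbc1 nKx x cK in \<open>auto simp: a1_def a2_def\<close>)
    have a3c: "is_colouring l V E a3" using rch_col[OF r3] by simp
    have r4: "rch l V E a3 a4 1" unfolding a4_def
      by (rule single_move[OF a3c _ x(1) _ sg]) (use cc nbc3 nKx x cK in \<open>auto simp: a1_def a2_def a3_def\<close>)
    have a4c: "is_colouring l V E a4" using rch_col[OF r4] by simp
    have r14: "rch l V E \<alpha> a4 4" using rch_trans[OF r4 rch_trans[OF r3 rch_trans[OF r2 r1]]] by (simp add: numeral_eq_Suc)
    have a4K: "a4 v = \<alpha> v" if "v \<in> K \<or> v \<in> I \<or> v \<notin> V" for v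
      using that cK cI cc by (auto simp: a1_def a2_def a3_def a4_def)
    define \<pi> where "\<pi> = \<alpha>(c1 := x, c2 := y)"
    have piI: "\<pi> (\<gamma> v) = \<alpha> (\<gamma> v)" if "v \<in> I" for v
      using gI[OF that] cK cc by (auto simp: \<pi>_def)
    have finI: "finite I" using finV by (simp add: I_def)
    have "rch l V E a4 (\<lambda>v. if v \<in> I then \<pi> (\<gamma> v) else a4 v) (card I)"
    proof (rule batch[OF finI])
      fix g assume g1: "\<forall>v. v \<notin> I \<longrightarrow> g v = a4 v" and g2: "\<forall>v\<in>I. g v = a4 v \<or> g v = \<pi> (\<gamma> v)"
      have ki: "g u \<noteq> g v" if u: "u \<in> I" and e: "E u v" for u v
      proof -
        have vK: "v \<in> K" using nbI[OF u e] .
        have "g v = \<alpha> v" using g1 a4K vK cI by (metis Iind u e)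
        moreover have "g u = \<alpha> u \<or> g u = \<alpha> (\<gamma> u)" using g2 a4K piI u by metis
        moreover have "\<alpha> u \<noteq> \<alpha> v" using ac e by blast
        moreover have "\<alpha> (\<gamma> u) \<noteq> \<alpha> v"
        proof (cases "\<gamma> u \<in> K \<and> \<not> E (\<gamma> u) u")
          case True
          then have "\<gamma> u \<noteq> v" using e sym by blast
          then have "E (\<gamma> u) v" using Kc True vK by blast
          then show ?thesis using ac by blast
        next
          case False
          then have "\<gamma> u = c0" using gI[OF u] by blast
          then show ?thesis using kall[OF vK] ac sym by metis
        qed
        ultimately show ?thesis by metis
      qed
      show "is_colouring l V E g"
        unfolding is_colouring_def
      proof (intro conjI ballI allI impI)
        fix v assume v: "v \<in> V"
        have "a4 v \<in> {1..l}" using a4c v by (simp add: is_colouring_def)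
        moreover have "\<gamma> v \<in> V" using gU[OF v] KV cc by (auto simp: U_def)
        moreover have "v \<in> I \<Longrightarrow> \<pi> (\<gamma> v) \<in> {1..l}" using piI arng calculation(2) by metis
        ultimately show "g v \<in> {1..l}" using g1 g2 v by metis
      next
        fix v assume "v \<notin> V" then show "g v = 0" using g1 a4c by (simp add: is_colouring_def I_def)
      next
        fix u v assume e: "E u v"
        show "g u \<noteq> g v"
        proof (cases "u \<in> I")
          case True then show ?thesis using ki e by blast
        next
          case False
          show ?thesis
          proof (cases "v \<in> I")
            case True
            have "g v \<noteq> g u" using ki[OF True sym[OF e]] .
            then show ?thesis by metis
          next
            case F2: False
            then show ?thesis using False g1 a4c e by (simp add: is_colouring_def)
          qed
        qed
      qed
    qed
    moreover have "(\<lambda>v. if v \<in> I then \<pi> (\<gamma> v) else a4 v) = col V \<gamma> \<pi>"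
    proof
      fix v
      show "(if v \<in> I then \<pi> (\<gamma> v) else a4 v) = col V \<gamma> \<pi> v"
      proof (cases "v \<in> V")
        case False
        then show ?thesis using a4K a I_def by (simp add: col_def is_colouring_def)
      next
        case True
        then consider "v \<in> K" | "v \<in> I" | "v = c0" | "v = c1" | "v = c2" | "v = c3" | "v = c4"
          using Vpart by (auto simp: C_def)
        then show ?thesis
        proof cases
          case 1 then show ?thesis using True a4K gK cK cI by (auto simp: col_def \<pi>_def)
        next
          case 2 then show ?thesis using True by (simp add: col_def)
        next
          case 3 then show ?thesis using True cc gC cI by (auto simp: col_def \<pi>_def a1_def a2_def a3_def a4_def)
        next
          case 4 then show ?thesis using True cc gC cI by (auto simp: col_def \<pi>_def a1_def a2_def a3_def a4_def)
        next
          case 5 then show ?thesis using True cc gC cI by (auto simp: col_def \<pi>_def a1_def a2_def a3_def a4_def)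
        next
          case 6 then show ?thesis using True cc gC cI by (auto simp: col_def \<pi>_def a1_def a2_def a3_def a4_def)
        next
          case 7 then show ?thesis using True cc gC cI by (auto simp: col_def \<pi>_def a1_def a2_def a3_def a4_def)
        qed
      qed
    qed
    moreover have "card I + 4 \<le> card V"
    proof -
      have "I \<subseteq> V - C" by (auto simp: I_def)
      then have "card I \<le> card (V - C)" using finV by (simp add: card_mono)
      moreover have "card (V - C) = card V - 5" using CV finV cc by (simp add: card_Diff_subset C_def)
      moreover have "card C \<le> card V" using CV finV by (simp add: card_mono)
      moreover have "card C = 5" using cc by (simp add: C_def)
      ultimately show ?thesis by simp
    qed
    ultimately have rr: "rch l V E \<alpha> (col V \<gamma> \<pi>) (card V)"
      using rch_trans[OF _ r14] rch_mono by (metis add.commute)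
    have pinj: "inj_on \<pi> U"
      unfolding inj_on_def
    proof (intro ballI impI)
      fix u w assume u: "u \<in> U" and w: "w \<in> U" and eq: "\<pi> u = \<pi> w"
      have pK: "\<pi> v = \<alpha> v" if "v \<in> K" for v using that cK by (auto simp: \<pi>_def)
      have pc: "\<pi> c0 = \<alpha> c0" "\<pi> c1 = x" "\<pi> c2 = y" using cc by (auto simp: \<pi>_def)
      have c0K: "\<alpha> c0 \<notin> \<alpha> ` K" using kall ac sym by fastforce
      show "u = w"
        proof -
        have xK: "x \<notin> \<alpha> ` K" "y \<notin> \<alpha> ` K" using x y by auto
        have cs: "u \<in> K \<or> u = c0 \<or> u = c1 \<or> u = c2" "w \<in> K \<or> w = c0 \<or> w = c1 \<or> w = c2"
          using u w by (auto simp: U_def)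
        show ?thesis
        proof (cases "u \<in> K \<and> w \<in> K")
          case True
          then show ?thesis using eq pK ainj by (metis inj_onD)
        next
          case False
          have img: "\<pi> v \<in> \<alpha> ` K" if "v \<in> K" for v using pK that by simp
          show ?thesis using cs False eq img pc c0K xK x y by (metis)
        qed
        qed
    qed
    have prng: "\<pi> ` U \<subseteq> {1..l}"
      using arng KV cc x y by (auto simp: U_def \<pi>_def)
    show "\<exists>\<pi>. inj_on \<pi> U \<and> \<pi> ` U \<subseteq> {1..l} \<and> rch l V E \<alpha> (col V \<gamma> \<pi>) (card V)"
      using pinj prng rr by blast
  qed
qed

end



theorem theorem7:
  fixes V :: "'a set" and E :: "'a \<Rightarrow> 'a \<Rightarrow> bool" and l :: nat
  assumes "simple_graph V E"
    and "\<not> has_induced_2K2 V E"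
    and "\<not> has_induced_C4 V E"
    and "l \<ge> chromatic_number V E + 1"
  shows "recon_connected l V E \<and> recon_diam_le l V E (4 * card V)"
proof -
  interpret pgraph V E using assms(1-3) by unfold_locales
  show ?thesis
  proof (cases "\<exists>c0 c1 c2 c3 c4. C5 V E c0 c1 c2 c3 c4")
    case True
    then obtain c0 c1 c2 c3 c4 where "C5 V E c0 c1 c2 c3 c4" by blast
    then show ?thesis using caseA assms(4) by blast
  next
    case False
    then obtain K where "clq K" "\<forall>x\<in>V-K. \<forall>y\<in>V-K. \<not> E x y" "\<forall>x\<in>V-K. \<exists>a\<in>K. \<not> E a x"
      using split by blast
    then show ?thesis using caseB assms(4) by blast
  qed
qed

end
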